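(* Let $M$ be a compact translating soliton in $\mathbb{H}^2\times\mathbb{R}$ with boundary $\Gamma=\partial M$. If $\Gamma$ lies in the region between two vertical planes, then the whole soliton $M$ lies between those planes.
   Context: $\mathbb{H}^2\times\mathbb{R}$ carries the product metric $\langle\cdot,\cdot\rangle$ of the hyperbolic plane of curvature $-1$ and the real line; $\partial_z$ is the unit vertical field. A vertical plane is a surface $\gamma\times\mathbb{R}$ with $\gamma\subset\mathbb{H}^2$ a complete geodesic; "$\Gamma$ lies between two vertical planes $P_1,P_2$" means that for each $i$, $\Gamma$ is contained in one closed half-space determined by $P_i$, namely the one containing the other plane. An oriented immersed surface $M$ with unit normal $\eta$ and mean curvature $H_M$ (half the trace of the second fundamental form with respect to $\eta$) is a translating soliton if $H_M=\langle\eta,\partial_z\rangle$. *)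

theory Defs
  imports "HOL-Analysis.Analysis"
begin

text \<open>Model: H^2 x R realised as the upper half-space {(x,y,z). y > 0} with metric
  (dx^2 + dy^2)/y^2 + dz^2.  Points and tangent vectors are triples (x, y, z).\<close>

type_synonym pt = "real \<times> real \<times> real"

definition cx :: "pt \<Rightarrow> real" where "cx p = fst p"
definition cy :: "pt \<Rightarrow> real" where "cy p = fst (snd p)"
definition cz :: "pt \<Rightarrow> real" where "cz p = snd (snd p)"

definition HxR :: "pt set" where "HxR = {p. cy p > 0}"

definition hinner :: "pt \<Rightarrow> pt \<Rightarrow> pt \<Rightarrow> real" where
  "hinner p a b = (cx a * cx b + cy a * cy b) / (cy p)^2 + cz a * cz b"

text \<open>Christoffel symbols: Gamma_p(a,b) with (nabla_X Y)^k = dY^k(X) + Gamma^k_ij X^i Y^j.\<close>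
definition chris :: "pt \<Rightarrow> pt \<Rightarrow> pt \<Rightarrow> pt" where
  "chris p a b = ( - (cx a * cy b + cy a * cx b) / cy p,
                   (cx a * cx b - cy a * cy b) / cy p,
                   0)"

definition vert_field :: pt where "vert_field = (0, 0, 1)"

definition pd1 :: "(real \<times> real \<Rightarrow> 'b::real_normed_vector) \<Rightarrow> real \<times> real \<Rightarrow> 'b" where
  "pd1 F q = frechet_derivative F (at q) (1, 0)"
definition pd2 :: "(real \<times> real \<Rightarrow> 'b::real_normed_vector) \<Rightarrow> real \<times> real \<Rightarrow> 'b" where
  "pd2 F q = frechet_derivative F (at q) (0, 1)"

definition C2_on :: "(real \<times> real) set \<Rightarrow> (real \<times> real \<Rightarrow> pt) \<Rightarrow> bool" where
  "C2_on U F \<longleftrightarrow> open U \<and>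
     (\<forall>q\<in>U. F differentiable (at q) \<and> pd1 F differentiable (at q) \<and> pd2 F differentiable (at q)) \<and>
     continuous_on U (pd1 (pd1 F)) \<and> continuous_on U (pd2 (pd1 F)) \<and>
     continuous_on U (pd1 (pd2 F)) \<and> continuous_on U (pd2 (pd2 F))"

definition immersion_on :: "(real \<times> real) set \<Rightarrow> (real \<times> real \<Rightarrow> pt) \<Rightarrow> bool" where
  "immersion_on U F \<longleftrightarrow> (\<forall>q\<in>U. pd1 F q \<noteq> 0 \<and> (\<forall>c. pd2 F q \<noteq> c *\<^sub>R pd1 F q))"

definition closed_upper :: "(real \<times> real) set" where
  "closed_upper = {q. snd q \<ge> 0}"

definition surface_chart ::
  "'a topology \<Rightarrow> ('a \<Rightarrow> pt) \<Rightarrow> (real \<times> real) set \<Rightarrow> (real \<times> real \<Rightarrow> 'a) \<Rightarrow> (real \<times> real \<Rightarrow> pt) \<Rightarrow> bool"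
  where
  "surface_chart T f U \<psi> F \<longleftrightarrow>
     open U \<and> openin T (\<psi> ` (U \<inter> closed_upper)) \<and>
     homeomorphic_map (subtopology euclidean (U \<inter> closed_upper))
                      (subtopology T (\<psi> ` (U \<inter> closed_upper))) \<psi> \<and>
     C2_on U F \<and> immersion_on U F \<and> F ` U \<subseteq> HxR \<and>
     (\<forall>q\<in>U \<inter> closed_upper. F q = f (\<psi> q))"

definition compact_immersed_surface :: "'a topology \<Rightarrow> ('a \<Rightarrow> pt) \<Rightarrow> bool" where
  "compact_immersed_surface T f \<longleftrightarrow>
     compact_space T \<and> Hausdorff_space T \<and>
     (\<forall>x\<in>topspace T. \<exists>U \<psi> F. surface_chart T f U \<psi> F \<and> x \<in> \<psi> ` (U \<inter> closed_upper))"

definition surface_boundary :: "'a topology \<Rightarrow> ('a \<Rightarrow> pt) \<Rightarrow> 'a set" where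
  "surface_boundary T f =
     {x. \<exists>U \<psi> F q. surface_chart T f U \<psi> F \<and> q \<in> U \<and> snd q = 0 \<and> \<psi> q = x}"

text \<open>Mean curvature (half the trace of II w.r.t. the normal n, II(X,Y) = <nabla_X Y, n>)
  of the parametrisation F at q.\<close>
definition mean_curv :: "(real \<times> real \<Rightarrow> pt) \<Rightarrow> pt \<Rightarrow> real \<times> real \<Rightarrow> real" where
  "mean_curv F n q =
     (let p = F q; Xu = pd1 F q; Xv = pd2 F q;
          E = hinner p Xu Xu; Fm = hinner p Xu Xv; G = hinner p Xv Xv;
          e = hinner p (pd1 (pd1 F) q + chris p Xu Xu) n;
          f = hinner p (pd2 (pd1 F) q + chris p Xu Xv) n;
          g = hinner p (pd2 (pd2 F) q + chris p Xv Xv) n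
      in (e * G - 2 * f * Fm + g * E) / (2 * (E * G - Fm^2)))"

definition unit_normal :: "'a topology \<Rightarrow> ('a \<Rightarrow> pt) \<Rightarrow> ('a \<Rightarrow> pt) \<Rightarrow> bool" where
  "unit_normal T f \<eta> \<longleftrightarrow> continuous_map T euclidean \<eta> \<and>
     (\<forall>U \<psi> F. surface_chart T f U \<psi> F \<longrightarrow>
        (\<forall>q\<in>U \<inter> closed_upper.
           hinner (F q) (\<eta> (\<psi> q)) (pd1 F q) = 0 \<and>
           hinner (F q) (\<eta> (\<psi> q)) (pd2 F q) = 0 \<and>
           hinner (F q) (\<eta> (\<psi> q)) (\<eta> (\<psi> q)) = 1))"

definition translating_soliton :: "'a topology \<Rightarrow> ('a \<Rightarrow> pt) \<Rightarrow> ('a \<Rightarrow> pt) \<Rightarrow> bool" where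
  "translating_soliton T f \<eta> \<longleftrightarrow>
     compact_immersed_surface T f \<and> unit_normal T f \<eta> \<and>
     (\<forall>U \<psi> F. surface_chart T f U \<psi> F \<longrightarrow>
        (\<forall>q\<in>U. snd q > 0 \<longrightarrow>
           mean_curv F (\<eta> (\<psi> q)) q = hinner (F q) (\<eta> (\<psi> q)) vert_field))"

definition vline :: "real \<Rightarrow> (real \<times> real) set" where
  "vline c = {(x, y). x = c \<and> y > 0}"
definition hcirc :: "real \<Rightarrow> real \<Rightarrow> (real \<times> real) set" where
  "hcirc c r = {(x, y). (x - c)^2 + y^2 = r^2 \<and> y > 0}"

definition closed_halfplane :: "(real \<times> real) set \<Rightarrow> (real \<times> real) set \<Rightarrow> bool" where
  "closed_halfplane \<gamma> S \<longleftrightarrow>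
     (\<exists>c. \<gamma> = vline c \<and>
        (S = {(x, y). x \<le> c \<and> y > 0} \<or> S = {(x, y). x \<ge> c \<and> y > 0})) \<or>
     (\<exists>c r. r > 0 \<and> \<gamma> = hcirc c r \<and>
        (S = {(x, y). (x - c)^2 + y^2 \<le> r^2 \<and> y > 0} \<or>
         S = {(x, y). (x - c)^2 + y^2 \<ge> r^2 \<and> y > 0}))"

definition proj_H2 :: "pt \<Rightarrow> real \<times> real" where
  "proj_H2 p = (cx p, cy p)"

end

theory Submission
  imports Defs
begin

definition wfun :: "real \<Rightarrow> real \<Rightarrow> real \<Rightarrow> real \<Rightarrow> real \<Rightarrow> real" where
  "wfun A B C x y = (A*(x^2+y^2) + B*x + C)/y"
definition wxf :: "real \<Rightarrow> real \<Rightarrow> real \<Rightarrow> real \<Rightarrow> real \<Rightarrow> real" where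
  "wxf A B C x y = (2*A*x + B)/y"
definition wyf :: "real \<Rightarrow> real \<Rightarrow> real \<Rightarrow> real \<Rightarrow> real \<Rightarrow> real" where
  "wyf A B C x y = A - (A*x^2 + B*x + C)/y^2"
definition wxxf :: "real \<Rightarrow> real \<Rightarrow> real \<Rightarrow> real \<Rightarrow> real \<Rightarrow> real" where
  "wxxf A B C x y = 2*A/y"
definition wxyf :: "real \<Rightarrow> real \<Rightarrow> real \<Rightarrow> real \<Rightarrow> real \<Rightarrow> real" where
  "wxyf A B C x y = -(2*A*x + B)/y^2"
definition wyyf :: "real \<Rightarrow> real \<Rightarrow> real \<Rightarrow> real \<Rightarrow> real \<Rightarrow> real" where
  "wyyf A B C x y = 2*(A*x^2 + B*x + C)/y^3"

lemma k_identity: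
  assumes "y > 0"
  shows "wxxf A B C x y * (wyf A B C x y)^2 - 2 * wxyf A B C x y * wxf A B C x y * wyf A B C x y
     + wyyf A B C x y * (wxf A B C x y)^2
     - (wxf A B C x y * (2 * wyf A B C x y * wxf A B C x y / y)
        + wyf A B C x y * (((wyf A B C x y)^2 - (wxf A B C x y)^2) / y))
   = wfun A B C x y * ((wxf A B C x y)^2 + (wyf A B C x y)^2) / y^2"
  using assms unfolding wfun_def wxf_def wyf_def wxxf_def wxyf_def wyyf_def
  by (simp add: field_simps power2_eq_square power3_eq_cube)

lemma Hform:
  fixes wx wy wxx wxy wyy k x y z \<alpha> \<gamma> \<nu> sa sb cc cd ce :: real
  assumes y: "y > 0" and nu: "\<nu> \<noteq> 0"
    and kdef: "wxx * wy^2 - 2 * wxy * wx * wy + wyy * wx^2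
       - (wx * (2 * wy * wx / y) + wy * ((wy^2 - wx^2) / y)) = k"
  shows "wxx*(- \<alpha> * wy)*(- \<gamma> * wy) + wxy*((- \<alpha> * wy)*(\<gamma> * wx) + (\<alpha> * wx)*(- \<gamma> * wy)) + wyy*(\<alpha> * wx)*(\<gamma> * wx) + wx*cc + wy*cd
     = (y^2/\<nu>) * hinner (x,y,z) ((cc,cd,ce) + chris (x,y,z) (- \<alpha> * wy, \<alpha> * wx, sa) (- \<gamma> * wy, \<gamma> * wx, sb)) (\<nu>*wx,\<nu>*wy,0) + \<alpha>*\<gamma> * k"
proof -
  define a1 where "a1 = - \<alpha> * wy"
  define a2 where "a2 = \<alpha> * wx"
  define b1 where "b1 = - \<gamma> * wy"
  define b2 where "b2 = \<gamma> * wx"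
  have 1: "(y^2/\<nu>) * hinner (x,y,z) ((cc,cd,ce) + chris (x,y,z) (a1,a2,sa) (b1,b2,sb)) (\<nu>*wx,\<nu>*wy,0)
     = wx*cc + wy*cd + wx * (-(a1*b2+a2*b1)/y) + wy * ((a1*b1 - a2*b2)/y)"
    using y nu by (simp add: hinner_def chris_def cx_def cy_def cz_def field_simps power2_eq_square)
  have 2: "wxx*a1*b1 + wxy*(a1*b2+a2*b1) + wyy*a2*b2 + wx*cc + wy*cd = wx*cc + wy*cd + wx * (-(a1*b2+a2*b1)/y) + wy * ((a1*b1 - a2*b2)/y) + \<alpha>*\<gamma> * k"
    unfolding kdef[symmetric] a1_def a2_def b1_def b2_def
    using y by (simp add: field_simps power2_eq_square)
  have 3: "wxx*a1*b1 + wxy*(a1*b2+a2*b1) + wyy*a2*b2 + wx*cc + wy*cd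
     = (y^2/\<nu>) * hinner (x,y,z) ((cc,cd,ce) + chris (x,y,z) (a1,a2,sa) (b1,b2,sb)) (\<nu>*wx,\<nu>*wy,0) + \<alpha>*\<gamma> * k"
    using 1 2 by linarith
  show ?thesis using 3 by (simp only: a1_def a2_def b1_def b2_def)
qed

lemma par_helper:
  fixes wx wy a1 a2 :: real
  assumes "wx*a1 + wy*a2 = 0"
  shows "a1*(wx^2+wy^2) = -(a2*wx - a1*wy)*wy" "a2*(wx^2+wy^2) = (a2*wx - a1*wy)*wx"
proof -
  have "a1*(wx^2+wy^2) - (-(a2*wx - a1*wy)*wy) = wx*(wx*a1 + wy*a2)" by (simp add: algebra_simps power2_eq_square)
  then show "a1*(wx^2+wy^2) = -(a2*wx - a1*wy)*wy" using assms by simp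
  have "a2*(wx^2+wy^2) - (a2*wx - a1*wy)*wx = wy*(wx*a1 + wy*a2)" by (simp add: algebra_simps power2_eq_square)
  then show "a2*(wx^2+wy^2) = (a2*wx - a1*wy)*wx" using assms by simp
qed

lemma par_helper2:
  fixes wx wy n1 n2 :: real
  assumes "n2*wx - n1*wy = 0"
  shows "n1*(wx^2+wy^2) = (n1*wx + n2*wy)*wx" "n2*(wx^2+wy^2) = (n1*wx + n2*wy)*wy"
proof -
  have "n1*(wx^2+wy^2) - (n1*wx + n2*wy)*wx = - wy*(n2*wx - n1*wy)" by (simp add: algebra_simps power2_eq_square)
  then show "n1*(wx^2+wy^2) = (n1*wx + n2*wy)*wx" using assms by simp
  have "n2*(wx^2+wy^2) - (n1*wx + n2*wy)*wy = wx*(n2*wx - n1*wy)" by (simp add: algebra_simps power2_eq_square)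
  then show "n2*(wx^2+wy^2) = (n1*wx + n2*wy)*wy" using assms by simp
qed

lemma alg_contra:
  fixes wx wy wxx wxy wyy k x y z a1 a2 a3 b1 b2 b3 n1 n2 n3 c1 c2 c3 d1 d2 d3 e1 e2 e3 :: real
  defines "p \<equiv> (x,y,z)" and "a \<equiv> (a1,a2,a3)" and "b \<equiv> (b1,b2,b3)" and "n \<equiv> (n1,n2,n3)"
  assumes y: "y > 0"
    and kdef: "wxx * wy^2 - 2 * wxy * wx * wy + wyy * wx^2
       - (wx * (2 * wy * wx / y) + wy * ((wy^2 - wx^2) / y)) = k"
    and kpos: "k > 0"
    and nd: "wx^2 + wy^2 > 0"
    and fo1: "wx * a1 + wy * a2 = 0" and fo2: "wx * b1 + wy * b2 = 0"
    and imm1: "a \<noteq> 0" and imm2: "\<forall>c. b \<noteq> c *\<^sub>R a"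
    and nor1: "hinner p n a = 0" and nor2: "hinner p n b = 0" and nor3: "hinner p n n = 1"
    and mc: "(let E = hinner p a a; Fm = hinner p a b; G = hinner p b b;
          e = hinner p ((c1,c2,c3) + chris p a a) n;
          f = hinner p ((d1,d2,d3) + chris p a b) n;
          g = hinner p ((e1,e2,e3) + chris p b b) n
      in (e * G - 2 * f * Fm + g * E) / (2 * (E * G - Fm^2))) = hinner p n vert_field"
    and nsd: "\<And>uu vv. uu^2 * (wxx*a1*a1 + 2*wxy*a1*a2 + wyy*a2*a2 + wx*c1 + wy*c2)
        + 2 * uu * vv * (wxx*a1*b1 + wxy*(a1*b2+a2*b1) + wyy*a2*b2 + wx*d1 + wy*d2)
        + vv^2 * (wxx*b1*b1 + 2*wxy*b1*b2 + wyy*b2*b2 + wx*e1 + wy*e2) \<le> 0"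
  shows False
proof -
  define N where "N = wx^2 + wy^2"
  have N: "N > 0" using nd N_def by simp
  define \<alpha> where "\<alpha> = (a2*wx - a1*wy)/N"
  define \<gamma> where "\<gamma> = (b2*wx - b1*wy)/N"
  have a1: "a1 = - \<alpha> * wy" and a2: "a2 = \<alpha> * wx"
  proof -
    have "a1 * N = - (a2*wx - a1*wy) * wy"
      unfolding N_def using par_helper[OF fo1] by simp
    then show "a1 = - \<alpha> * wy" unfolding \<alpha>_def using N by (simp add: field_simps)
    have "a2 * N = (a2*wx - a1*wy) * wx"
      unfolding N_def using par_helper[OF fo1] by simp
    then show "a2 = \<alpha> * wx" unfolding \<alpha>_def using N by (simp add: field_simps)
  qed
  have b1: "b1 = - \<gamma> * wy" and b2: "b2 = \<gamma> * wx"
  proof -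
    have "b1 * N = - (b2*wx - b1*wy) * wy"
      unfolding N_def using par_helper[OF fo2] by simp
    then show "b1 = - \<gamma> * wy" unfolding \<gamma>_def using N by (simp add: field_simps)
    have "b2 * N = (b2*wx - b1*wy) * wx"
      unfolding N_def using par_helper[OF fo2] by simp
    then show "b2 = \<gamma> * wx" unfolding \<gamma>_def using N by (simp add: field_simps)
  qed
  define D where "D = \<alpha> * b3 - \<gamma> * a3"
  have D: "D \<noteq> 0"
  proof
    assume D0: "D = 0"
    show False
    proof (cases "\<alpha> = 0")
      case True
      then have "a3 \<noteq> 0" using imm1 a1 a2 unfolding a_def by (auto simp: zero_prod_def)
      then have "\<gamma> = 0" using D0 True unfolding D_def by simp
      then have "b = (b3/a3) *\<^sub>R a" using \<open>a3 \<noteq> 0\<close> True a1 a2 b1 b2 unfolding a_def b_def by simp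
      then show False using imm2 by blast
    next
      case False
      have "b3 = (\<gamma>/\<alpha>) * a3" using D0 False unfolding D_def by (simp add: field_simps)
      then have "b = (\<gamma>/\<alpha>) *\<^sub>R a" using False a1 a2 b1 b2 unfolding a_def b_def by simp
      then show False using imm2 by blast
    qed
  qed
  define s where "s = n2*wx - n1*wy"
  have e1: "\<alpha> * s / y^2 + n3 * a3 = 0"
    using nor1 unfolding p_def n_def a_def hinner_def s_def cx_def cy_def cz_def a1 a2
    by (simp add: algebra_simps)
  have e2: "\<gamma> * s / y^2 + n3 * b3 = 0"
    using nor2 unfolding p_def n_def b_def hinner_def s_def cx_def cy_def cz_def b1 b2
    by (simp add: algebra_simps)
  have "D * (s / y^2) = 0"
  proof -
    have "b3 * (\<alpha> * s / y^2 + n3 * a3) - a3 * (\<gamma> * s / y^2 + n3 * b3) = 0" using e1 e2 by simp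
    then show ?thesis unfolding D_def by (auto simp: algebra_simps)
  qed
  then have s0: "s = 0" using D y by simp
  have n30: "n3 = 0"
  proof -
    have "\<gamma> * (\<alpha> * s / y^2 + n3 * a3) - \<alpha> * (\<gamma> * s / y^2 + n3 * b3) = 0" using e1 e2 by simp
    then have "n3 * D = 0" unfolding D_def by (auto simp: algebra_simps)
    then show ?thesis using D by simp
  qed
  define \<nu> where "\<nu> = (n1*wx + n2*wy)/N"
  have n1: "n1 = \<nu> * wx" and n2: "n2 = \<nu> * wy"
  proof -
    have "n1 * N = (n1*wx + n2*wy) * wx"
      unfolding N_def using par_helper2[of n2 wx n1 wy] s0 s_def by simp
    then show "n1 = \<nu> * wx" unfolding \<nu>_def using N by (simp add: field_simps)
    have "n2 * N = (n1*wx + n2*wy) * wy"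
      unfolding N_def using par_helper2[of n2 wx n1 wy] s0 s_def by simp
    then show "n2 = \<nu> * wy" unfolding \<nu>_def using N by (simp add: field_simps)
  qed
  have nu2: "\<nu>^2 * N = y^2"
    using nor3 y unfolding p_def n_def hinner_def cx_def cy_def cz_def n1 n2 n30 N_def
    by (simp add: field_simps power2_eq_square)
  have nu: "\<nu> \<noteq> 0" using nu2 y by auto
  define M where "M = N / y^2"
  have M: "M > 0" using N y M_def by simp
  define E where "E = hinner p a a"
  define Fm where "Fm = hinner p a b"
  define G where "G = hinner p b b"
  have E: "E = \<alpha>^2 * M + a3^2"
    unfolding E_def p_def a_def hinner_def cx_def cy_def cz_def a1 a2 M_def N_def
    by (simp add: field_simps power2_eq_square)
  have Fm: "Fm = \<alpha>*\<gamma> * M + a3*b3"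
    unfolding Fm_def p_def a_def b_def hinner_def cx_def cy_def cz_def a1 a2 b1 b2 M_def N_def
    by (simp add: field_simps power2_eq_square)
  have G: "G = \<gamma>^2 * M + b3^2"
    unfolding G_def p_def b_def hinner_def cx_def cy_def cz_def b1 b2 M_def N_def
    by (simp add: field_simps power2_eq_square)
  have det: "E * G - Fm^2 = M * D^2"
    unfolding E G Fm D_def by (simp add: algebra_simps power2_eq_square)
  have detpos: "E * G - Fm^2 > 0" using det M D by simp
  have Gpos: "G > 0"
  proof -
    have "\<not> (\<gamma> = 0 \<and> b3 = 0)"
    proof
      assume "\<gamma> = 0 \<and> b3 = 0"
      then have "b = 0 *\<^sub>R a" unfolding b_def b1 b2 by (simp add: zero_prod_def)
      then show False using imm2 by blast
    qed
    then have "\<gamma>^2 * M + b3^2 > 0" using M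
    proof (cases "\<gamma> = 0")
      case True
      then have "b3 \<noteq> 0" using \<open>\<not> (\<gamma> = 0 \<and> b3 = 0)\<close> by simp
      then show ?thesis using True by simp
    next
      case False
      then have "\<gamma>^2 * M > 0" using M by simp
      then show ?thesis by (simp add: add_pos_nonneg)
    qed
    then show ?thesis using G by simp
  qed
  define e where "e = hinner p ((c1,c2,c3) + chris p a a) n"
  define f where "f = hinner p ((d1,d2,d3) + chris p a b) n"
  define g where "g = hinner p ((e1,e2,e3) + chris p b b) n"
  have num: "e * G - 2 * f * Fm + g * E = 0"
  proof -
    have "(e * G - 2 * f * Fm + g * E) / (2 * (E * G - Fm^2)) = 0"
      using mc unfolding Let_def E_def[symmetric] Fm_def[symmetric] G_def[symmetric]
        e_def[symmetric] f_def[symmetric] g_def[symmetric]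
      by (simp add: hinner_def vert_field_def n_def cx_def cy_def cz_def n30)
    then show ?thesis using detpos by simp
  qed
  define H11 where "H11 = wxx*a1*a1 + 2*wxy*a1*a2 + wyy*a2*a2 + wx*c1 + wy*c2"
  define H12 where "H12 = wxx*a1*b1 + wxy*(a1*b2+a2*b1) + wyy*a2*b2 + wx*d1 + wy*d2"
  define H22 where "H22 = wxx*b1*b1 + 2*wxy*b1*b2 + wyy*b2*b2 + wx*e1 + wy*e2"
  have He: "H11 = (y^2/\<nu>) * e + \<alpha>^2 * k"
    using Hform[where \<alpha>=\<alpha> and \<gamma>=\<alpha> and cc=c1 and cd=c2 and ce=c3 and x=x and z=z and sa=a3 and sb=a3, OF y nu kdef]
    unfolding H11_def e_def p_def a_def n_def a1 a2 n1 n2 n30 by (simp add: algebra_simps power2_eq_square)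
  have Hf: "H12 = (y^2/\<nu>) * f + \<alpha>*\<gamma> * k"
    using Hform[where \<alpha>=\<alpha> and \<gamma>=\<gamma> and cc=d1 and cd=d2 and ce=d3 and x=x and z=z and sa=a3 and sb=b3, OF y nu kdef]
    unfolding H12_def f_def p_def a_def b_def n_def a1 a2 b1 b2 n1 n2 n30 by (simp add: algebra_simps power2_eq_square)
  have Hg: "H22 = (y^2/\<nu>) * g + \<gamma>^2 * k"
    using Hform[where \<alpha>=\<gamma> and \<gamma>=\<gamma> and cc=e1 and cd=e2 and ce=e3 and x=x and z=z and sa=b3 and sb=b3, OF y nu kdef]
    unfolding H22_def g_def p_def b_def n_def b1 b2 n1 n2 n30 by (simp add: algebra_simps power2_eq_square)
  define Z where "Z = H11 * G - 2 * H12 * Fm + H22 * E"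
  have Zeq: "Z = (y^2/\<nu>) * (e * G - 2 * f * Fm + g * E) + k * D^2"
    unfolding Z_def He Hf Hg D_def E G Fm using nu by (simp add: field_simps power2_eq_square)
  have Zpos: "Z > 0" using Zeq num kpos D by simp
  have q1: "G^2 * H11 + 2 * G * (-Fm) * H12 + (-Fm)^2 * H22 \<le> 0"
    using nsd[of G "-Fm"] unfolding H11_def H12_def H22_def by simp
  have q2: "H22 \<le> 0" using nsd[of 0 1] unfolding H22_def by simp
  have "G * Z = (G^2 * H11 + 2 * G * (-Fm) * H12 + (-Fm)^2 * H22) + (E * G - Fm^2) * H22"
    unfolding Z_def by (simp add: algebra_simps power2_eq_square)
  also have "\<dots> \<le> 0" using q1 q2 detpos by (simp add: add_nonpos_nonpos mult_nonneg_nonpos)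
  finally have "G * Z \<le> 0" .
  then show False using Gpos Zpos by (simp add: mult_le_0_iff)
qed



lemma second_order_1d:
  fixes h hd :: "real \<Rightarrow> real"
  assumes r: "r > 0"
    and d1: "\<And>t. \<bar>t\<bar> < r \<Longrightarrow> (h has_real_derivative hd t) (at t)"
    and d2: "(hd has_real_derivative c) (at 0)"
    and mx: "\<And>t. \<bar>t\<bar> < r \<Longrightarrow> h t \<le> h 0"
  shows "hd 0 = 0 \<and> c \<le> 0"
proof
  show h0: "hd 0 = 0"
    by (rule DERIV_local_max[OF d1[of 0] r]) (use r mx in auto)
  show "c \<le> 0"
  proof (rule ccontr)
    assume "\<not> c \<le> 0"
    then have c: "c > 0" by simp
    from d2 have "(hd has_derivative (\<lambda>x. c * x)) (at 0)"
      by (simp add: has_field_derivative_def)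
    then obtain d where d: "d > 0" and dd: "\<And>y. norm (y - 0) < d \<Longrightarrow> norm (hd y - hd 0 - c * (y - 0)) \<le> (c/2) * norm (y - 0)"
      unfolding has_derivative_at_alt using c by (meson half_gt_zero)
    define t0 where "t0 = min d r / 2"
    have t0: "t0 > 0" "t0 < d" "t0 < r" using d r unfolding t0_def by auto
    have pos: "hd t > 0" if "0 < t" "t \<le> t0" for t
    proof -
      have "\<bar>hd t - c * t\<bar> \<le> (c/2) * \<bar>t\<bar>" using dd[of t] that t0 h0 by simp
      then show ?thesis using that c by (auto simp: abs_if split: if_splits) (smt (verit) mult_pos_pos)
    qed
    obtain z where z: "0 < z" "z < t0" "h t0 - h 0 = (t0 - 0) * hd z"
      using MVT2[of 0 t0 h hd] d1 t0 by force
    have "h t0 - h 0 > 0" using z pos[of z] t0 by simp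
    moreover have "h t0 \<le> h 0" using mx[of t0] t0 by simp
    ultimately show False by simp
  qed
qed



lemma lin2_scale1:
  assumes "bounded_linear L" shows "L (t, 0::real) = t * L (1::real, 0::real)"
proof -
  have "L (t, 0::real) = L (t *\<^sub>R (1::real, 0::real))" by simp
  also have "\<dots> = t *\<^sub>R L (1::real, 0::real)" by (rule linear_scale[OF bounded_linear.linear[OF assms]])
  finally show ?thesis by simp
qed

lemma lin2_scale2:
  assumes "bounded_linear L" shows "L (0::real, t) = t * L (0::real, 1::real)"
proof -
  have "L (0::real, t) = L (t *\<^sub>R (0::real, 1::real))" by simp
  also have "\<dots> = t *\<^sub>R L (0::real, 1::real)" by (rule linear_scale[OF bounded_linear.linear[OF assms]])
  finally show ?thesis by simp
qed

lemma lin2_split: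
  fixes L :: "real \<times> real \<Rightarrow> 'b::real_normed_vector"
  assumes "bounded_linear L" shows "L (a, b) = a *\<^sub>R L (1, 0) + b *\<^sub>R L (0, 1)"
proof -
  note lin = bounded_linear.linear[OF assms]
  have "L (a, b) = L (a *\<^sub>R (1, 0) + b *\<^sub>R (0, 1))" by simp
  also have "\<dots> = L (a *\<^sub>R (1, 0)) + L (b *\<^sub>R (0, 1))" by (rule linear_add[OF lin])
  also have "\<dots> = a *\<^sub>R L (1, 0) + b *\<^sub>R L (0, 1)" by (simp only: linear_scale[OF lin])
  finally show ?thesis .
qed

lemma line_deriv1:
  fixes g :: "real \<times> real \<Rightarrow> real"
  assumes "(g has_derivative G) (at (q0 + (s,k)))"
  shows "((\<lambda>s. g (q0 + (s,k))) has_real_derivative G (1,0)) (at s)"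
proof -
  have l: "((\<lambda>s. q0 + (s,k)) has_derivative (\<lambda>t. (t,0))) (at s)"
    by (auto intro!: derivative_eq_intros)
  have "((g \<circ> (\<lambda>s. q0 + (s,k))) has_derivative (G \<circ> (\<lambda>t. (t,0)))) (at s)"
    by (rule diff_chain_at[OF l]) (use assms in simp)
  moreover have "G \<circ> (\<lambda>t. (t,0)) = (*) (G (1,0))"
  proof (rule ext)
    fix t show "(G \<circ> (\<lambda>t. (t,0))) t = (*) (G (1,0)) t"
      using lin2_scale1[OF has_derivative_bounded_linear[OF assms], of t] by (simp add: mult.commute)
  qed
  ultimately show ?thesis by (simp add: has_field_derivative_def o_def)
qed

lemma line_deriv2:
  fixes g :: "real \<times> real \<Rightarrow> real"
  assumes "(g has_derivative G) (at (q0 + (k,s)))"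
  shows "((\<lambda>s. g (q0 + (k,s))) has_real_derivative G (0,1)) (at s)"
proof -
  have l: "((\<lambda>s. q0 + (k,s)) has_derivative (\<lambda>t. (0,t))) (at s)"
    by (auto intro!: derivative_eq_intros)
  have "((g \<circ> (\<lambda>s. q0 + (k,s))) has_derivative (G \<circ> (\<lambda>t. (0,t)))) (at s)"
    by (rule diff_chain_at[OF l]) (use assms in simp)
  moreover have "G \<circ> (\<lambda>t. (0,t)) = (*) (G (0,1))"
  proof (rule ext)
    fix t show "(G \<circ> (\<lambda>t. (0,t))) t = (*) (G (0,1)) t"
      using lin2_scale2[OF has_derivative_bounded_linear[OF assms], of t] by (simp add: mult.commute)
  qed
  ultimately show ?thesis by (simp add: has_field_derivative_def o_def)
qed



lemma young:
  fixes g :: "real \<times> real \<Rightarrow> real" and g' :: "real \<times> real \<Rightarrow> real \<times> real \<Rightarrow> real"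
  assumes r: "r > 0"
    and dg: "\<And>q. q \<in> ball q0 r \<Longrightarrow> (g has_derivative g' q) (at q)"
    and d1: "((\<lambda>q. g' q (1,0)) has_derivative D1) (at q0)"
    and d2: "((\<lambda>q. g' q (0,1)) has_derivative D2) (at q0)"
  shows "D1 (0,1) = D2 (1,0)"
proof (rule ccontr)
  assume ne: "D1 (0,1) \<noteq> D2 (1,0)"
  define \<delta> where "\<delta> = \<bar>D1 (0,1) - D2 (1,0)\<bar>"
  have \<delta>: "\<delta> > 0" using ne \<delta>_def by simp
  define \<epsilon> where "\<epsilon> = \<delta> / 8"
  have \<epsilon>: "\<epsilon> > 0" using \<delta> \<epsilon>_def by simp
  have bl1: "bounded_linear D1" using d1 by (rule has_derivative_bounded_linear)
  have bl2: "bounded_linear D2" using d2 by (rule has_derivative_bounded_linear)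
  obtain e1 where e1: "e1 > 0" and E1: "\<And>y. norm (y - q0) < e1 \<Longrightarrow>
      norm (g' y (1,0) - g' q0 (1,0) - D1 (y - q0)) \<le> \<epsilon> * norm (y - q0)"
    using d1 \<epsilon> unfolding has_derivative_at_alt by meson
  obtain e2 where e2: "e2 > 0" and E2: "\<And>y. norm (y - q0) < e2 \<Longrightarrow>
      norm (g' y (0,1) - g' q0 (0,1) - D2 (y - q0)) \<le> \<epsilon> * norm (y - q0)"
    using d2 \<epsilon> unfolding has_derivative_at_alt by meson
  define h where "h = min (min e1 e2) r / 4"
  have h: "h > 0" "2*h < e1" "2*h < e2" "2*h < r" using e1 e2 r unfolding h_def by auto
  have nrm: "norm (s, t) \<le> 2*h" if "0 \<le> s" "s \<le> h" "0 \<le> t" "t \<le> h" for s t :: real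
  proof -
    have "norm (s,t) \<le> norm s + norm t" by (rule norm_Pair_le)
    then show ?thesis using that by simp
  qed
  have inball: "q0 + (s,t) \<in> ball q0 r" if "0 \<le> s" "s \<le> h" "0 \<le> t" "t \<le> h" for s t :: real
  proof -
    have "dist q0 (q0 + (s,t)) = norm (s,t)" by (simp add: dist_norm norm_Pair)
    then show ?thesis using nrm[OF that] h by simp
  qed
  define \<Delta> where "\<Delta> = g (q0 + (h,h)) - g (q0 + (h,0)) - g (q0 + (0,h)) + g q0"
  have est1: "\<bar>\<Delta> - h^2 * D1 (0,1)\<bar> \<le> 3 * \<epsilon> * h^2"
  proof -
    define \<phi> where "\<phi> s = g (q0 + (s,h)) - g (q0 + (s,0))" for s
    have der: "(\<phi> has_real_derivative (g' (q0 + (s,h)) (1,0) - g' (q0 + (s,0)) (1,0))) (at s)"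
      if "0 \<le> s" "s \<le> h" for s
    proof -
      have a: "(g has_derivative g' (q0 + (s,h))) (at (q0 + (s,h)))" using dg inball that h by simp
      have b: "(g has_derivative g' (q0 + (s,0))) (at (q0 + (s,0)))" using dg inball that h by simp
      show ?thesis unfolding \<phi>_def
        by (rule DERIV_diff[OF line_deriv1[OF a] line_deriv1[OF b]])
    qed
    obtain \<xi> where \<xi>: "0 < \<xi>" "\<xi> < h" "\<phi> h - \<phi> 0 = (h - 0) * (g' (q0 + (\<xi>,h)) (1,0) - g' (q0 + (\<xi>,0)) (1,0))"
      using MVT2[of 0 h \<phi> "\<lambda>s. g' (q0 + (s,h)) (1,0) - g' (q0 + (s,0)) (1,0)"] der h by auto
    have D: "\<Delta> = \<phi> h - \<phi> 0" unfolding \<Delta>_def \<phi>_def by (simp add: zero_prod_def[symmetric])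
    have A: "\<bar>g' (q0 + (\<xi>,h)) (1,0) - g' q0 (1,0) - D1 (\<xi>,h)\<bar> \<le> \<epsilon> * (2*h)"
    proof -
      have "norm ((q0 + (\<xi>,h)) - q0) \<le> 2*h" using nrm[of \<xi> h] \<xi> h by simp
      then have "\<bar>g' (q0 + (\<xi>,h)) (1,0) - g' q0 (1,0) - D1 (\<xi>,h)\<bar> \<le> \<epsilon> * norm (\<xi>,h)"
        using E1[of "q0 + (\<xi>,h)"] h by simp
      also have "\<dots> \<le> \<epsilon> * (2*h)" using nrm[of \<xi> h] \<xi> h \<epsilon> by (intro mult_left_mono) auto
      finally show ?thesis .
    qed
    have B: "\<bar>g' (q0 + (\<xi>,0)) (1,0) - g' q0 (1,0) - D1 (\<xi>,0)\<bar> \<le> \<epsilon> * h"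
    proof -
      have "norm ((q0 + (\<xi>,0)) - q0) \<le> 2*h" using nrm[of \<xi> 0] \<xi> h by simp
      then have "\<bar>g' (q0 + (\<xi>,0)) (1,0) - g' q0 (1,0) - D1 (\<xi>,0)\<bar> \<le> \<epsilon> * norm (\<xi>,0::real)"
        using E1[of "q0 + (\<xi>,0)"] h by simp
      also have "\<dots> \<le> \<epsilon> * h" using \<xi> \<epsilon> by (intro mult_left_mono) (auto simp: norm_Pair)
      finally show ?thesis .
    qed
    have lin: "D1 (\<xi>,h) - D1 (\<xi>,0) = h * D1 (0,1)"
      using lin2_split[OF bl1, of \<xi> h] lin2_split[OF bl1, of \<xi> 0] by simp
    have C: "\<bar>(g' (q0 + (\<xi>,h)) (1,0) - g' (q0 + (\<xi>,0)) (1,0)) - h * D1 (0,1)\<bar> \<le> 3 * \<epsilon> * h"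
      using A B lin by linarith
    have eq: "\<Delta> - h^2 * D1 (0,1) = h * ((g' (q0 + (\<xi>,h)) (1,0) - g' (q0 + (\<xi>,0)) (1,0)) - h * D1 (0,1))"
      using D \<xi>(3) by (simp add: power2_eq_square algebra_simps)
    have "\<bar>\<Delta> - h^2 * D1 (0,1)\<bar> = h * \<bar>(g' (q0 + (\<xi>,h)) (1,0) - g' (q0 + (\<xi>,0)) (1,0)) - h * D1 (0,1)\<bar>"
      unfolding eq using h by (simp add: abs_mult)
    also have "\<dots> \<le> h * (3 * \<epsilon> * h)" using C h by (intro mult_left_mono) auto
    finally show ?thesis by (simp add: power2_eq_square algebra_simps)
  qed
  have est2: "\<bar>\<Delta> - h^2 * D2 (1,0)\<bar> \<le> 3 * \<epsilon> * h^2"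
  proof -
    define \<phi> where "\<phi> s = g (q0 + (h,s)) - g (q0 + (0,s))" for s
    have der: "(\<phi> has_real_derivative (g' (q0 + (h,s)) (0,1) - g' (q0 + (0,s)) (0,1))) (at s)"
      if "0 \<le> s" "s \<le> h" for s
    proof -
      have a: "(g has_derivative g' (q0 + (h,s))) (at (q0 + (h,s)))" using dg inball that h by simp
      have b: "(g has_derivative g' (q0 + (0,s))) (at (q0 + (0,s)))" using dg inball that h by simp
      show ?thesis unfolding \<phi>_def
        by (rule DERIV_diff[OF line_deriv2[OF a] line_deriv2[OF b]])
    qed
    obtain \<xi> where \<xi>: "0 < \<xi>" "\<xi> < h" "\<phi> h - \<phi> 0 = (h - 0) * (g' (q0 + (h,\<xi>)) (0,1) - g' (q0 + (0,\<xi>)) (0,1))"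
      using MVT2[of 0 h \<phi> "\<lambda>s. g' (q0 + (h,s)) (0,1) - g' (q0 + (0,s)) (0,1)"] der h by auto
    have D: "\<Delta> = \<phi> h - \<phi> 0" unfolding \<Delta>_def \<phi>_def by (simp add: zero_prod_def[symmetric])
    have A: "\<bar>g' (q0 + (h,\<xi>)) (0,1) - g' q0 (0,1) - D2 (h,\<xi>)\<bar> \<le> \<epsilon> * (2*h)"
    proof -
      have "norm ((q0 + (h,\<xi>)) - q0) \<le> 2*h" using nrm[of h \<xi>] \<xi> h by simp
      then have "\<bar>g' (q0 + (h,\<xi>)) (0,1) - g' q0 (0,1) - D2 (h,\<xi>)\<bar> \<le> \<epsilon> * norm (h,\<xi>)"
        using E2[of "q0 + (h,\<xi>)"] h by simp
      also have "\<dots> \<le> \<epsilon> * (2*h)" using nrm[of h \<xi>] \<xi> h \<epsilon> by (intro mult_left_mono) auto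
      finally show ?thesis .
    qed
    have B: "\<bar>g' (q0 + (0,\<xi>)) (0,1) - g' q0 (0,1) - D2 (0,\<xi>)\<bar> \<le> \<epsilon> * h"
    proof -
      have "norm ((q0 + (0,\<xi>)) - q0) \<le> 2*h" using nrm[of 0 \<xi>] \<xi> h by simp
      then have "\<bar>g' (q0 + (0,\<xi>)) (0,1) - g' q0 (0,1) - D2 (0,\<xi>)\<bar> \<le> \<epsilon> * norm (0::real,\<xi>)"
        using E2[of "q0 + (0,\<xi>)"] h by simp
      also have "\<dots> \<le> \<epsilon> * h" using \<xi> \<epsilon> by (intro mult_left_mono) (auto simp: norm_Pair)
      finally show ?thesis .
    qed
    have lin: "D2 (h,\<xi>) - D2 (0,\<xi>) = h * D2 (1,0)"
      using lin2_split[OF bl2, of h \<xi>] lin2_split[OF bl2, of 0 \<xi>] by simp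
    have C: "\<bar>(g' (q0 + (h,\<xi>)) (0,1) - g' (q0 + (0,\<xi>)) (0,1)) - h * D2 (1,0)\<bar> \<le> 3 * \<epsilon> * h"
      using A B lin by linarith
    have D': "\<Delta> = \<phi> h - \<phi> 0" using D .
    have eq: "\<Delta> - h^2 * D2 (1,0) = h * ((g' (q0 + (h,\<xi>)) (0,1) - g' (q0 + (0,\<xi>)) (0,1)) - h * D2 (1,0))"
      using D \<xi>(3) by (simp add: power2_eq_square algebra_simps)
    have "\<bar>\<Delta> - h^2 * D2 (1,0)\<bar> = h * \<bar>(g' (q0 + (h,\<xi>)) (0,1) - g' (q0 + (0,\<xi>)) (0,1)) - h * D2 (1,0)\<bar>"
      unfolding eq using h by (simp add: abs_mult)
    also have "\<dots> \<le> h * (3 * \<epsilon> * h)" using C h by (intro mult_left_mono) auto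
    finally show ?thesis by (simp add: power2_eq_square algebra_simps)
  qed
  have "h^2 * \<delta> \<le> 6 * \<epsilon> * h^2"
  proof -
    have "h^2 * \<delta> = \<bar>(\<Delta> - h^2 * D2 (1,0)) - (\<Delta> - h^2 * D1 (0,1))\<bar>"
    proof -
      have "(\<Delta> - h^2 * D2 (1,0)) - (\<Delta> - h^2 * D1 (0,1)) = h^2 * (D1 (0,1) - D2 (1,0))" by (simp add: algebra_simps)
      then show ?thesis unfolding \<delta>_def by (simp add: abs_mult)
    qed
    also have "\<dots> \<le> 6 * \<epsilon> * h^2" using est1 est2 by linarith
    finally show ?thesis .
  qed
  then have "\<delta> \<le> 6 * \<epsilon>" using h by (simp add: mult.commute)
  then show False using \<delta> \<epsilon>_def by simp
qed



lemma line_chain: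
  fixes f :: "real \<times> real \<Rightarrow> real"
  assumes "(f has_derivative F) (at (q0 + \<tau> *\<^sub>R d))"
  shows "((\<lambda>\<tau>. f (q0 + \<tau> *\<^sub>R d)) has_real_derivative F d) (at \<tau>)"
proof -
  have l: "((\<lambda>\<tau>. q0 + \<tau> *\<^sub>R d) has_derivative (\<lambda>x. x *\<^sub>R d)) (at \<tau>)"
    by (auto intro!: derivative_eq_intros)
  have "((f \<circ> (\<lambda>\<tau>. q0 + \<tau> *\<^sub>R d)) has_derivative (F \<circ> (\<lambda>x. x *\<^sub>R d))) (at \<tau>)"
    by (rule diff_chain_at[OF l]) (use assms in simp)
  moreover have "F \<circ> (\<lambda>x. x *\<^sub>R d) = (*) (F d)"
  proof (rule ext)
    fix x show "(F \<circ> (\<lambda>x. x *\<^sub>R d)) x = (*) (F d) x"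
      using linear_scale[OF bounded_linear.linear[OF has_derivative_bounded_linear[OF assms]], of x d]
      by (simp add: mult.commute)
  qed
  ultimately show ?thesis by (simp add: has_field_derivative_def o_def)
qed

lemma hess_test:
  fixes g :: "real \<times> real \<Rightarrow> real" and g' :: "real \<times> real \<Rightarrow> real \<times> real \<Rightarrow> real"
  assumes r: "r > 0"
    and dg: "\<And>q. q \<in> ball q0 r \<Longrightarrow> (g has_derivative g' q) (at q)"
    and d1: "((\<lambda>q. g' q (1,0)) has_derivative D1) (at q0)"
    and d2: "((\<lambda>q. g' q (0,1)) has_derivative D2) (at q0)"
    and mx: "\<And>q. q \<in> ball q0 r \<Longrightarrow> g q \<le> g q0"
  shows "g' q0 (1,0) = 0 \<and> g' q0 (0,1) = 0 \<and>
    (\<forall>s t. s^2 * D1 (1,0) + 2 * s * t * D1 (0,1) + t^2 * D2 (0,1) \<le> 0)"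
proof -
  have Y: "D1 (0,1) = D2 (1,0)" by (rule young[OF r dg d1 d2])
  have bl1: "bounded_linear D1" using d1 by (rule has_derivative_bounded_linear)
  have bl2: "bounded_linear D2" using d2 by (rule has_derivative_bounded_linear)
  have main: "g' q0 (s,t) = 0 \<and> s * D1 (s,t) + t * D2 (s,t) \<le> 0" if nz: "(s,t) \<noteq> (0::real \<times> real)" for s t
  proof -
    define d where "d = (s,t)"
    have nd: "norm d > 0" using nz d_def by simp
    define \<rho> where "\<rho> = r / norm d"
    have \<rho>: "\<rho> > 0" using r nd \<rho>_def by simp
    have inb: "q0 + \<tau> *\<^sub>R d \<in> ball q0 r" if "\<bar>\<tau>\<bar> < \<rho>" for \<tau>
    proof -
      have "dist q0 (q0 + \<tau> *\<^sub>R d) = \<bar>\<tau>\<bar> * norm d" by (simp add: dist_norm)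
      also have "\<dots> < \<rho> * norm d" using that nd by simp
      also have "\<dots> = r" using nd \<rho>_def by simp
      finally show ?thesis by simp
    qed
    define hd where "hd \<tau> = s * g' (q0 + \<tau> *\<^sub>R d) (1,0) + t * g' (q0 + \<tau> *\<^sub>R d) (0,1)" for \<tau>
    have D1': "((\<lambda>\<tau>. g (q0 + \<tau> *\<^sub>R d)) has_real_derivative hd \<tau>) (at \<tau>)" if "\<bar>\<tau>\<bar> < \<rho>" for \<tau>
    proof -
      have dgt: "(g has_derivative g' (q0 + \<tau> *\<^sub>R d)) (at (q0 + \<tau> *\<^sub>R d))" using dg inb that by simp
      have "g' (q0 + \<tau> *\<^sub>R d) d = hd \<tau>"
        using lin2_split[OF has_derivative_bounded_linear[OF dgt], of s t] unfolding hd_def d_def by simp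
      then show ?thesis using line_chain[OF dgt] by simp
    qed
    have D2': "(hd has_real_derivative (s * D1 d + t * D2 d)) (at 0)"
    proof -
      have a: "((\<lambda>\<tau>. g' (q0 + \<tau> *\<^sub>R d) (1,0)) has_real_derivative D1 d) (at 0)"
        by (rule line_chain) (use d1 in simp)
      have b: "((\<lambda>\<tau>. g' (q0 + \<tau> *\<^sub>R d) (0,1)) has_real_derivative D2 d) (at 0)"
        by (rule line_chain) (use d2 in simp)
      show ?thesis unfolding hd_def
        by (intro DERIV_add DERIV_cmult a b)
    qed
    have mx': "g (q0 + \<tau> *\<^sub>R d) \<le> g (q0 + 0 *\<^sub>R d)" if "\<bar>\<tau>\<bar> < \<rho>" for \<tau>
      using mx[OF inb[OF that]] by simp
    have res: "hd 0 = 0 \<and> s * D1 d + t * D2 d \<le> 0"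
      by (rule second_order_1d[where h="\<lambda>\<tau>. g (q0 + \<tau> *\<^sub>R d)", OF \<rho> D1' D2' mx'])
    have "g' q0 (s,t) = hd 0"
      using lin2_split[OF has_derivative_bounded_linear[OF dg[of q0]], of s t] r unfolding hd_def by simp
    then show ?thesis using res d_def by simp
  qed
  have "g' q0 (1,0) = 0" using main[of 1 0] by (simp add: zero_prod_def)
  moreover have "g' q0 (0,1) = 0" using main[of 0 1] by (simp add: zero_prod_def)
  moreover have "s^2 * D1 (1,0) + 2 * s * t * D1 (0,1) + t^2 * D2 (0,1) \<le> 0" for s t
  proof (cases "(s,t) = (0::real \<times> real)")
    case True then show ?thesis by (simp add: zero_prod_def)
  next
    case False
    have "s * D1 (s,t) + t * D2 (s,t) = s^2 * D1 (1,0) + 2 * s * t * D1 (0,1) + t^2 * D2 (0,1)"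
      using lin2_split[OF bl1, of s t] lin2_split[OF bl2, of s t] Y by (simp add: algebra_simps power2_eq_square)
    then show ?thesis using main[OF False] by simp
  qed
  ultimately show ?thesis by blast
qed



lemma w_deriv:
  fixes X Y :: "'a::real_normed_vector \<Rightarrow> real"
  assumes "(X has_derivative X') (at q)" "(Y has_derivative Y') (at q)" "Y q > 0"
  shows "((\<lambda>q. wfun A B C (X q) (Y q)) has_derivative
     (\<lambda>v. wxf A B C (X q) (Y q) * X' v + wyf A B C (X q) (Y q) * Y' v)) (at q)"
  unfolding wfun_def wxf_def wyf_def
  using assms
  apply (auto intro!: derivative_eq_intros)
  apply (rule ext)
  apply (simp add: field_simps power2_eq_square)
  done

lemma wx_deriv:
  fixes X Y :: "'a::real_normed_vector \<Rightarrow> real"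
  assumes "(X has_derivative X') (at q)" "(Y has_derivative Y') (at q)" "Y q > 0"
  shows "((\<lambda>q. wxf A B C (X q) (Y q)) has_derivative
     (\<lambda>v. wxxf A B C (X q) (Y q) * X' v + wxyf A B C (X q) (Y q) * Y' v)) (at q)"
  unfolding wxf_def wxxf_def wxyf_def
  using assms
  apply (auto intro!: derivative_eq_intros)
  apply (rule ext)
  apply (simp add: field_simps power2_eq_square)
  done

lemma wy_deriv:
  fixes X Y :: "'a::real_normed_vector \<Rightarrow> real"
  assumes "(X has_derivative X') (at q)" "(Y has_derivative Y') (at q)" "Y q > 0"
  shows "((\<lambda>q. wyf A B C (X q) (Y q)) has_derivative
     (\<lambda>v. wxyf A B C (X q) (Y q) * X' v + wyyf A B C (X q) (Y q) * Y' v)) (at q)"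
  unfolding wyf_def wxyf_def wyyf_def
  using assms
  apply (auto intro!: derivative_eq_intros)
  apply (rule ext)
  apply (simp add: field_simps eval_nat_numeral)
  done



lemma local_contra:
  fixes F :: "real \<times> real \<Rightarrow> pt" and n :: pt and q0 :: "real \<times> real"
  assumes C2: "C2_on U F" and imm: "immersion_on U F" and FU: "F ` U \<subseteq> HxR"
    and q0U: "q0 \<in> U" and r: "r > 0" and ballU: "ball q0 r \<subseteq> U"
    and mx: "\<And>q. q \<in> ball q0 r \<Longrightarrow> wfun A B C (cx (F q)) (cy (F q)) \<le> wfun A B C (cx (F q0)) (cy (F q0))"
    and pos: "wfun A B C (cx (F q0)) (cy (F q0)) > 0"
    and nd: "\<And>x y. y > 0 \<Longrightarrow> (wxf A B C x y)^2 + (wyf A B C x y)^2 > 0"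
    and nor1: "hinner (F q0) n (pd1 F q0) = 0" and nor2: "hinner (F q0) n (pd2 F q0) = 0"
    and nor3: "hinner (F q0) n n = 1"
    and mc: "mean_curv F n q0 = hinner (F q0) n vert_field"
  shows False
proof -
  have ypos: "\<And>q. q \<in> U \<Longrightarrow> cy (F q) > 0" using FU by (auto simp: HxR_def)
  define X where "X q = cx (F q)" for q
  define Y where "Y q = cy (F q)" for q
  define DF where "DF q = frechet_derivative F (at q)" for q
  have dF: "(F has_derivative DF q) (at q)" if "q \<in> U" for q
    using C2 that unfolding C2_on_def DF_def by (auto simp: frechet_derivative_works)
  have dX: "(X has_derivative (\<lambda>v. cx (DF q v))) (at q)" if "q \<in> U" for q
    unfolding X_def cx_def by (rule has_derivative_fst[OF dF[OF that]])
  have dY: "(Y has_derivative (\<lambda>v. cy (DF q v))) (at q)" if "q \<in> U" for q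
    unfolding Y_def cy_def by (rule has_derivative_fst[OF has_derivative_snd[OF dF[OF that]]])
  have Yp: "Y q > 0" if "q \<in> U" for q using ypos[OF that] Y_def by simp
  define g where "g q = wfun A B C (X q) (Y q)" for q
  define g' where "g' q = (\<lambda>v. wxf A B C (X q) (Y q) * cx (DF q v) + wyf A B C (X q) (Y q) * cy (DF q v))" for q
  have dg: "(g has_derivative g' q) (at q)" if "q \<in> ball q0 r" for q
  proof -
    have qU: "q \<in> U" using that ballU by auto
    show ?thesis unfolding g_def g'_def by (rule w_deriv[OF dX[OF qU] dY[OF qU] Yp[OF qU]])
  qed
  define P1 where "P1 = frechet_derivative (pd1 F) (at q0)"
  define P2 where "P2 = frechet_derivative (pd2 F) (at q0)"
  have dP1: "(pd1 F has_derivative P1) (at q0)"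
    using C2 q0U unfolding C2_on_def P1_def by (auto simp: frechet_derivative_works)
  have dP2: "(pd2 F has_derivative P2) (at q0)"
    using C2 q0U unfolding C2_on_def P2_def by (auto simp: frechet_derivative_works)
  have dP1x: "((\<lambda>q. cx (pd1 F q)) has_derivative (\<lambda>v. cx (P1 v))) (at q0)"
    unfolding cx_def by (rule has_derivative_fst[OF dP1])
  have dP1y: "((\<lambda>q. cy (pd1 F q)) has_derivative (\<lambda>v. cy (P1 v))) (at q0)"
    unfolding cy_def by (rule has_derivative_fst[OF has_derivative_snd[OF dP1]])
  have dP2x: "((\<lambda>q. cx (pd2 F q)) has_derivative (\<lambda>v. cx (P2 v))) (at q0)"
    unfolding cx_def by (rule has_derivative_fst[OF dP2])
  have dP2y: "((\<lambda>q. cy (pd2 F q)) has_derivative (\<lambda>v. cy (P2 v))) (at q0)"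
    unfolding cy_def by (rule has_derivative_fst[OF has_derivative_snd[OF dP2]])
  have g1: "(\<lambda>q. g' q (1,0)) = (\<lambda>q. wxf A B C (X q) (Y q) * cx (pd1 F q) + wyf A B C (X q) (Y q) * cy (pd1 F q))"
    unfolding g'_def pd1_def DF_def by simp
  have g2: "(\<lambda>q. g' q (0,1)) = (\<lambda>q. wxf A B C (X q) (Y q) * cx (pd2 F q) + wyf A B C (X q) (Y q) * cy (pd2 F q))"
    unfolding g'_def pd2_def DF_def by simp
  define x where "x = X q0"
  define y where "y = Y q0"
  have y: "y > 0" using Yp[OF q0U] y_def by simp
  define wx where "wx = wxf A B C x y"
  define wy where "wy = wyf A B C x y"
  define wxx where "wxx = wxxf A B C x y"
  define wxy where "wxy = wxyf A B C x y"
  define wyy where "wyy = wyyf A B C x y"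
  define D1 where "D1 = (\<lambda>h. (wx * cx (P1 h) + (wxx * cx (DF q0 h) + wxy * cy (DF q0 h)) * cx (pd1 F q0))
      + (wy * cy (P1 h) + (wxy * cx (DF q0 h) + wyy * cy (DF q0 h)) * cy (pd1 F q0)))"
  define D2 where "D2 = (\<lambda>h. (wx * cx (P2 h) + (wxx * cx (DF q0 h) + wxy * cy (DF q0 h)) * cx (pd2 F q0))
      + (wy * cy (P2 h) + (wxy * cx (DF q0 h) + wyy * cy (DF q0 h)) * cy (pd2 F q0)))"
  have d1: "((\<lambda>q. g' q (1,0)) has_derivative D1) (at q0)"
    unfolding g1 D1_def wx_def wy_def wxx_def wxy_def wyy_def x_def y_def
    by (intro has_derivative_add has_derivative_mult wx_deriv[OF dX[OF q0U] dY[OF q0U] Yp[OF q0U]]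
        wy_deriv[OF dX[OF q0U] dY[OF q0U] Yp[OF q0U]] dP1x dP1y)
  have d2: "((\<lambda>q. g' q (0,1)) has_derivative D2) (at q0)"
    unfolding g2 D2_def wx_def wy_def wxx_def wxy_def wyy_def x_def y_def
    by (intro has_derivative_add has_derivative_mult wx_deriv[OF dX[OF q0U] dY[OF q0U] Yp[OF q0U]]
        wy_deriv[OF dX[OF q0U] dY[OF q0U] Yp[OF q0U]] dP2x dP2y)
  have mx': "g q \<le> g q0" if "q \<in> ball q0 r" for q
    using mx[OF that] unfolding g_def X_def Y_def .
  have H: "g' q0 (1,0) = 0 \<and> g' q0 (0,1) = 0 \<and>
    (\<forall>s t. s^2 * D1 (1,0) + 2 * s * t * D1 (0,1) + t^2 * D2 (0,1) \<le> 0)"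
    by (rule hess_test[OF r dg d1 d2 mx'])
  have DF1: "DF q0 (1,0) = pd1 F q0" unfolding DF_def pd1_def ..
  have DF2: "DF q0 (0,1) = pd2 F q0" unfolding DF_def pd2_def ..
  have P11: "P1 (1,0) = pd1 (pd1 F) q0" unfolding P1_def pd1_def ..
  have P12: "P1 (0,1) = pd2 (pd1 F) q0" unfolding P1_def pd2_def ..
  have P22: "P2 (0,1) = pd2 (pd2 F) q0" unfolding P2_def pd2_def ..
  obtain z where p: "F q0 = (x, y, z)" unfolding x_def y_def X_def Y_def cx_def cy_def
    by (metis prod.collapse)
  obtain a1 a2 a3 where a: "pd1 F q0 = (a1,a2,a3)" by (metis prod.collapse)
  obtain b1 b2 b3 where b: "pd2 F q0 = (b1,b2,b3)" by (metis prod.collapse)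
  obtain n1 n2 n3 where nn: "n = (n1,n2,n3)" by (metis prod.collapse)
  obtain c1 c2 c3 where c: "pd1 (pd1 F) q0 = (c1,c2,c3)" by (metis prod.collapse)
  obtain d1 d2 d3 where d: "pd2 (pd1 F) q0 = (d1,d2,d3)" by (metis prod.collapse)
  obtain e1 e2 e3 where e: "pd2 (pd2 F) q0 = (e1,e2,e3)" by (metis prod.collapse)
  define k where "k = wfun A B C x y * (wx^2 + wy^2) / y^2"
  have kdef: "wxx * wy^2 - 2 * wxy * wx * wy + wyy * wx^2
       - (wx * (2 * wy * wx / y) + wy * ((wy^2 - wx^2) / y)) = k"
    unfolding k_def wx_def wy_def wxx_def wxy_def wyy_def by (rule k_identity[OF y])
  have ndp: "wx^2 + wy^2 > 0" unfolding wx_def wy_def using nd[OF y] .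
  have wpos: "wfun A B C x y > 0" using pos unfolding x_def y_def X_def Y_def .
  have kpos: "k > 0" unfolding k_def using wpos ndp y by simp
  have fo1: "wx * a1 + wy * a2 = 0"
    using H DF1 a unfolding g'_def wx_def wy_def x_def y_def by (simp add: cx_def cy_def)
  have fo2: "wx * b1 + wy * b2 = 0"
    using H DF2 b unfolding g'_def wx_def wy_def x_def y_def by (simp add: cx_def cy_def)
  have imm1: "(a1,a2,a3) \<noteq> 0" and imm2: "\<forall>c. (b1,b2,b3) \<noteq> c *\<^sub>R (a1,a2,a3)"
  proof -
    have i: "pd1 F q0 \<noteq> 0" "\<forall>c. pd2 F q0 \<noteq> c *\<^sub>R pd1 F q0"
      using imm q0U unfolding immersion_on_def by auto
    show "(a1,a2,a3) \<noteq> 0" using i(1) unfolding a .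
    show "\<forall>c. (b1,b2,b3) \<noteq> c *\<^sub>R (a1,a2,a3)" using i(2) unfolding a b .
  qed
  have nsd: "uu^2 * (wxx*a1*a1 + 2*wxy*a1*a2 + wyy*a2*a2 + wx*c1 + wy*c2)
        + 2 * uu * vv * (wxx*a1*b1 + wxy*(a1*b2+a2*b1) + wyy*a2*b2 + wx*d1 + wy*d2)
        + vv^2 * (wxx*b1*b1 + 2*wxy*b1*b2 + wyy*b2*b2 + wx*e1 + wy*e2) \<le> 0" for uu vv
  proof -
    have "uu^2 * D1 (1,0) + 2 * uu * vv * D1 (0,1) + vv^2 * D2 (0,1) \<le> 0" using H by blast
    moreover have "D1 (1,0) = wxx*a1*a1 + 2*wxy*a1*a2 + wyy*a2*a2 + wx*c1 + wy*c2"
      unfolding D1_def DF1 P11 a c by (simp add: cx_def cy_def algebra_simps)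
    moreover have "D1 (0,1) = wxx*a1*b1 + wxy*(a1*b2+a2*b1) + wyy*a2*b2 + wx*d1 + wy*d2"
      unfolding D1_def DF2 P12 a b d by (simp add: cx_def cy_def algebra_simps)
    moreover have "D2 (0,1) = wxx*b1*b1 + 2*wxy*b1*b2 + wyy*b2*b2 + wx*e1 + wy*e2"
      unfolding D2_def DF2 P22 b e by (simp add: cx_def cy_def algebra_simps)
    ultimately show ?thesis by simp
  qed
  have mc': "(let E = hinner (x,y,z) (a1,a2,a3) (a1,a2,a3); Fm = hinner (x,y,z) (a1,a2,a3) (b1,b2,b3);
          G = hinner (x,y,z) (b1,b2,b3) (b1,b2,b3);
          e = hinner (x,y,z) ((c1,c2,c3) + chris (x,y,z) (a1,a2,a3) (a1,a2,a3)) (n1,n2,n3);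
          f = hinner (x,y,z) ((d1,d2,d3) + chris (x,y,z) (a1,a2,a3) (b1,b2,b3)) (n1,n2,n3);
          g = hinner (x,y,z) ((e1,e2,e3) + chris (x,y,z) (b1,b2,b3) (b1,b2,b3)) (n1,n2,n3)
      in (e * G - 2 * f * Fm + g * E) / (2 * (E * G - Fm^2))) = hinner (x,y,z) (n1,n2,n3) vert_field"
    using mc unfolding mean_curv_def p a b c d e nn by (simp only: Let_def)
  show False
    by (rule alg_contra[OF y kdef kpos ndp fo1 fo2 imm1 imm2 _ _ _ mc' nsd])
      (use nor1 nor2 nor3 p a b nn in simp_all)
qed



lemma chart_facts:
  assumes "surface_chart T f U \<psi> F"
  shows "open U" "openin T (\<psi> ` (U \<inter> closed_upper))"
    "homeomorphic_map (subtopology euclidean (U \<inter> closed_upper)) (subtopology T (\<psi> ` (U \<inter> closed_upper))) \<psi>"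
    "C2_on U F" "immersion_on U F" "F ` U \<subseteq> HxR" "\<And>q. q \<in> U \<inter> closed_upper \<Longrightarrow> F q = f (\<psi> q)"
  using assms unfolding surface_chart_def by auto

lemma C2_cont: assumes "C2_on U F" shows "continuous_on U F"
proof (rule continuous_at_imp_continuous_on, rule ballI)
  fix q assume "q \<in> U"
  then have "F differentiable (at q)" using assms unfolding C2_on_def by auto
  then show "isCont F q" by (rule differentiable_imp_continuous_within)
qed

lemma chart_cont:
  assumes ch: "surface_chart T f U \<psi> F"
  shows "continuous_map (subtopology T (\<psi> ` (U \<inter> closed_upper))) euclidean
           (\<lambda>x. wfun A B C (cx (f x)) (cy (f x)))"
proof -
  define W where "W = \<psi> ` (U \<inter> closed_upper)"
  note cf = chart_facts[OF ch]
  obtain \<psi>' where hm: "homeomorphic_maps (top_of_set (U \<inter> closed_upper)) (subtopology T W) \<psi> \<psi>'"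
    using cf(3) unfolding W_def homeomorphic_map_maps by blast
  have c1: "continuous_map (subtopology T W) (top_of_set (U \<inter> closed_upper)) \<psi>'"
    using hm unfolding homeomorphic_maps_def by blast
  have inv: "\<And>y. y \<in> topspace (subtopology T W) \<Longrightarrow> \<psi> (\<psi>' y) = y"
    using hm unfolding homeomorphic_maps_def by blast
  have cF: "continuous_on U F" by (rule C2_cont[OF cf(4)])
  have ypos: "\<And>q. q \<in> U \<Longrightarrow> fst (snd (F q)) > 0" using cf(6) by (auto simp: HxR_def cy_def)
  have c2: "continuous_on U (\<lambda>q. wfun A B C (cx (F q)) (cy (F q)))"
    unfolding wfun_def cx_def cy_def
    using ypos by (intro continuous_intros cF) (metis less_irrefl)
  have c2': "continuous_on (U \<inter> closed_upper) (\<lambda>q. wfun A B C (cx (F q)) (cy (F q)))"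
    using c2 by (rule continuous_on_subset) auto
  have comp: "continuous_map (subtopology T W) euclidean ((\<lambda>q. wfun A B C (cx (F q)) (cy (F q))) \<circ> \<psi>')"
    by (rule continuous_map_compose[OF c1]) (simp add: c2')
  show ?thesis unfolding W_def[symmetric]
  proof (rule continuous_map_eq[OF comp])
    fix x assume x: "x \<in> topspace (subtopology T W)"
    have "\<psi>' x \<in> U \<inter> closed_upper"
      using continuous_map_image_subset_topspace[OF c1] x by auto
    then have "F (\<psi>' x) = f x" using cf(7) inv[OF x] by metis
    then show "((\<lambda>q. wfun A B C (cx (F q)) (cy (F q))) \<circ> \<psi>') x = wfun A B C (cx (f x)) (cy (f x))"
      by simp
  qed
qed

lemma phi_cont:
  assumes "compact_immersed_surface T f"
  shows "continuous_map T euclidean (\<lambda>x. wfun A B C (cx (f x)) (cy (f x)))"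
proof (rule pasting_lemma[where I="{W. openin T W \<and> continuous_map (subtopology T W) euclidean (\<lambda>x. wfun A B C (cx (f x)) (cy (f x)))}"
      and T="\<lambda>W. W" and f="\<lambda>W x. wfun A B C (cx (f x)) (cy (f x))"])
  fix x assume "x \<in> topspace T"
  then obtain U \<psi> F where ch: "surface_chart T f U \<psi> F" and x: "x \<in> \<psi> ` (U \<inter> closed_upper)"
    using assms unfolding compact_immersed_surface_def by blast
  show "\<exists>j. j \<in> {W. openin T W \<and> continuous_map (subtopology T W) euclidean (\<lambda>x. wfun A B C (cx (f x)) (cy (f x)))} \<and>
          x \<in> j \<and> wfun A B C (cx (f x)) (cy (f x)) = wfun A B C (cx (f x)) (cy (f x))"
    using chart_facts(2)[OF ch] chart_cont[OF ch] x by blast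
qed auto

lemma soliton_max:
  assumes sol: "translating_soliton T f \<eta>"
    and nd: "\<And>x y. y > 0 \<Longrightarrow> (wxf A B C x y)^2 + (wyf A B C x y)^2 > 0"
    and bd: "\<forall>x\<in>surface_boundary T f. wfun A B C (cx (f x)) (cy (f x)) \<le> 0"
  shows "\<forall>x\<in>topspace T. wfun A B C (cx (f x)) (cy (f x)) \<le> 0"
proof (cases "topspace T = {}")
  case True then show ?thesis by simp
next
  case False
  define \<phi> where "\<phi> x = wfun A B C (cx (f x)) (cy (f x))" for x
  have cis: "compact_immersed_surface T f" using sol unfolding translating_soliton_def by blast
  have un: "unit_normal T f \<eta>" using sol unfolding translating_soliton_def by blast
  have cont: "continuous_map T euclidean \<phi>" unfolding \<phi>_def by (rule phi_cont[OF cis])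
  have "compactin T (topspace T)" using cis unfolding compact_immersed_surface_def compact_space_def by blast
  then have "compact (\<phi> ` topspace T)" using image_compactin[OF _ cont] by simp
  then obtain m where m: "m \<in> \<phi> ` topspace T" and mm: "\<forall>t\<in>\<phi> ` topspace T. t \<le> m"
    using compact_attains_sup False by blast
  then obtain x0 where x0: "x0 \<in> topspace T" "\<phi> x0 = m" by blast
  show ?thesis
  proof (rule ccontr)
    assume "\<not> ?thesis"
    then obtain x1 where "x1 \<in> topspace T" "\<phi> x1 > 0" unfolding \<phi>_def by force
    then have mpos: "m > 0" using mm by force
    obtain U \<psi> F where ch: "surface_chart T f U \<psi> F" and x0U: "x0 \<in> \<psi> ` (U \<inter> closed_upper)"
      using cis x0(1) unfolding compact_immersed_surface_def by blast
    note cf = chart_facts[OF ch]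
    obtain q0 where q0: "q0 \<in> U" "snd q0 \<ge> 0" "\<psi> q0 = x0" using x0U unfolding closed_upper_def by auto
    have "snd q0 \<noteq> 0"
    proof
      assume "snd q0 = 0"
      then have "x0 \<in> surface_boundary T f" unfolding surface_boundary_def using ch q0 by blast
      then show False using bd mpos x0 unfolding \<phi>_def by force
    qed
    then have sq0: "snd q0 > 0" using q0 by simp
    obtain r0 where r0: "r0 > 0" "ball q0 r0 \<subseteq> U" using cf(1) q0(1) open_contains_ball by blast
    define r where "r = min r0 (snd q0)"
    have r: "r > 0" using r0 sq0 r_def by simp
    have ballU: "ball q0 r \<subseteq> U" using r0 r_def by auto
    have ballcu: "q \<in> U \<inter> closed_upper" if "q \<in> ball q0 r" for q
    proof -
      have "\<bar>snd q0 - snd q\<bar> \<le> dist q0 q"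
        using dist_snd_le[of q0 q] by (simp add: dist_real_def)
      then have "snd q > 0" using that r_def by auto
      then show ?thesis using that ballU unfolding closed_upper_def by auto
    qed
    have Wsub: "\<psi> ` (U \<inter> closed_upper) \<subseteq> topspace T" using cf(2) by (rule openin_subset)
    have q0cu: "q0 \<in> U \<inter> closed_upper" using q0 unfolding closed_upper_def by auto
    have Fq0: "F q0 = f x0" using cf(7)[OF q0cu] q0 by simp
    have mx: "wfun A B C (cx (F q)) (cy (F q)) \<le> wfun A B C (cx (F q0)) (cy (F q0))" if "q \<in> ball q0 r" for q
    proof -
      have "\<psi> q \<in> topspace T" using Wsub ballcu[OF that] by auto
      then have "\<phi> (\<psi> q) \<le> m" using mm by blast
      then show ?thesis using cf(7)[OF ballcu[OF that]] Fq0 x0 unfolding \<phi>_def by simp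
    qed
    have pos: "wfun A B C (cx (F q0)) (cy (F q0)) > 0" using Fq0 x0 mpos unfolding \<phi>_def by simp
    have nor: "hinner (F q0) (\<eta> (\<psi> q0)) (pd1 F q0) = 0 \<and> hinner (F q0) (\<eta> (\<psi> q0)) (pd2 F q0) = 0 \<and>
         hinner (F q0) (\<eta> (\<psi> q0)) (\<eta> (\<psi> q0)) = 1"
      using un ch q0cu unfolding unit_normal_def by blast
    have mc: "mean_curv F (\<eta> (\<psi> q0)) q0 = hinner (F q0) (\<eta> (\<psi> q0)) vert_field"
      using sol ch q0(1) sq0 unfolding translating_soliton_def by blast
    show False
      by (rule local_contra[OF cf(4) cf(5) cf(6) q0(1) r ballU mx pos nd _ _ _ mc])
        (use nor in auto)
  qed
qed



lemma nd_lemma: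
  fixes A B C :: real
  assumes "\<And>x y. y > 0 \<Longrightarrow> wxf A B C x y = 0 \<Longrightarrow> wyf A B C x y \<noteq> 0"
  shows "\<And>x y. y > 0 \<Longrightarrow> (wxf A B C x y)^2 + (wyf A B C x y)^2 > 0"
proof -
  fix x y :: real assume y: "y > 0"
  show "(wxf A B C x y)^2 + (wyf A B C x y)^2 > 0"
  proof (cases "wxf A B C x y = 0")
    case True then show ?thesis using assms[OF y True] by simp
  next
    case False then show ?thesis by (simp add: add_pos_nonneg)
  qed
qed

lemma halfplane_w:
  assumes "closed_halfplane \<gamma> S"
  shows "\<exists>A B C. (\<forall>x y. y > 0 \<longrightarrow> (wxf A B C x y)^2 + (wyf A B C x y)^2 > 0) \<and>
            (\<forall>x y. (x, y) \<in> S \<longleftrightarrow> (y > 0 \<and> wfun A B C x y \<le> 0))"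
  using assms unfolding closed_halfplane_def
proof (elim disjE exE conjE)
  fix c assume S: "S = {(x, y). x \<le> c \<and> y > 0}"
  show ?thesis
  proof (rule exI[of _ "(0)::real"], rule exI[of _ "(1)::real"], rule exI[of _ "(-c)::real"], intro conjI allI impI)
    fix x y :: real assume "y > 0"
    then show "(wxf 0 1 (-c) x y)^2 + (wyf 0 1 (-c) x y)^2 > 0" unfolding wxf_def by (simp add: add_pos_nonneg)
  next
    fix x y :: real
    show "(x, y) \<in> S \<longleftrightarrow> (y > 0 \<and> wfun 0 1 (-c) x y \<le> 0)"
      unfolding S wfun_def by (auto simp: divide_le_0_iff)
  qed
next
  fix c assume S: "S = {(x, y). x \<ge> c \<and> y > 0}"
  show ?thesis
  proof (rule exI[of _ "(0)::real"], rule exI[of _ "(-1)::real"], rule exI[of _ "(c)::real"], intro conjI allI impI)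
    fix x y :: real assume "y > 0"
    then show "(wxf 0 (-1) c x y)^2 + (wyf 0 (-1) c x y)^2 > 0" unfolding wxf_def by (simp add: add_pos_nonneg)
  next
    fix x y :: real
    show "(x, y) \<in> S \<longleftrightarrow> (y > 0 \<and> wfun 0 (-1) c x y \<le> 0)"
      unfolding S wfun_def by (auto simp: divide_le_0_iff)
  qed
next
  fix c r assume r: "r > 0" and S: "S = {(x, y). (x - c)^2 + y^2 \<le> r^2 \<and> y > 0}"
  show ?thesis
  proof (rule exI[of _ "(1)::real"], rule exI[of _ "(-2*c)::real"], rule exI[of _ "(c^2 - r^2)::real"], intro conjI allI impI)
    fix x y :: real assume y: "y > 0"
    show "(wxf 1 (-2*c) (c^2 - r^2) x y)^2 + (wyf 1 (-2*c) (c^2 - r^2) x y)^2 > 0"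
    proof (rule nd_lemma[OF _ y])
      fix x y :: real assume y: "y > 0" and "wxf 1 (-2*c) (c^2 - r^2) x y = 0"
      then have "x = c" unfolding wxf_def by simp
      then have "wyf 1 (-2*c) (c^2 - r^2) x y = 1 + r^2/y^2" unfolding wyf_def by (simp add: power2_eq_square algebra_simps)
      also have "\<dots> > 0" using y by (simp add: add_pos_nonneg)
      finally show "wyf 1 (-2*c) (c^2 - r^2) x y \<noteq> 0" by simp
    qed
  next
    fix x y :: real
    have "wfun 1 (-2*c) (c^2 - r^2) x y = ((x - c)^2 + y^2 - r^2) / y"
      unfolding wfun_def by (simp add: power2_eq_square algebra_simps)
    then show "(x, y) \<in> S \<longleftrightarrow> (y > 0 \<and> wfun 1 (-2*c) (c^2 - r^2) x y \<le> 0)"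
      unfolding S by (auto simp: divide_le_0_iff)
  qed
next
  fix c r assume r: "r > 0" and S: "S = {(x, y). (x - c)^2 + y^2 \<ge> r^2 \<and> y > 0}"
  show ?thesis
  proof (rule exI[of _ "(-1)::real"], rule exI[of _ "(2*c)::real"], rule exI[of _ "(r^2 - c^2)::real"], intro conjI allI impI)
    fix x y :: real assume y: "y > 0"
    show "(wxf (-1) (2*c) (r^2 - c^2) x y)^2 + (wyf (-1) (2*c) (r^2 - c^2) x y)^2 > 0"
    proof (rule nd_lemma[OF _ y])
      fix x y :: real assume y: "y > 0" and "wxf (-1) (2*c) (r^2 - c^2) x y = 0"
      then have "x = c" unfolding wxf_def by simp
      then have "wyf (-1) (2*c) (r^2 - c^2) x y = - (1 + r^2/y^2)" unfolding wyf_def by (simp add: power2_eq_square algebra_simps)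
      also have "\<dots> < 0"
      proof -
        have "r^2/y^2 \<ge> 0" by simp
        then show ?thesis by linarith
      qed
      finally show "wyf (-1) (2*c) (r^2 - c^2) x y \<noteq> 0" by simp
    qed
  next
    fix x y :: real
    have "wfun (-1) (2*c) (r^2 - c^2) x y = (r^2 - (x - c)^2 - y^2) / y"
      unfolding wfun_def by (simp add: power2_eq_square algebra_simps)
    then show "(x, y) \<in> S \<longleftrightarrow> (y > 0 \<and> wfun (-1) (2*c) (r^2 - c^2) x y \<le> 0)"
      unfolding S by (auto simp: divide_le_0_iff)
  qed
qed

lemma topspace_pos:
  assumes "compact_immersed_surface T f" "x \<in> topspace T"
  shows "cy (f x) > 0"
proof -
  obtain U \<psi> F where ch: "surface_chart T f U \<psi> F" and x: "x \<in> \<psi> ` (U \<inter> closed_upper)"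
    using assms unfolding compact_immersed_surface_def by blast
  then obtain q where q: "q \<in> U \<inter> closed_upper" "x = \<psi> q" by blast
  have "f x = F q" using chart_facts(7)[OF ch q(1)] q(2) by simp
  then show ?thesis using chart_facts(6)[OF ch] q(1) by (auto simp: HxR_def)
qed

lemma one_side:
  assumes sol: "translating_soliton T f \<eta>" and hp: "closed_halfplane \<gamma> S"
    and bd: "\<forall>x\<in>surface_boundary T f. proj_H2 (f x) \<in> S"
  shows "\<forall>x\<in>topspace T. proj_H2 (f x) \<in> S"
proof -
  obtain A B C where nd: "\<forall>x y. y > 0 \<longrightarrow> (wxf A B C x y)^2 + (wyf A B C x y)^2 > 0"
    and mem: "\<forall>x y. (x, y) \<in> S \<longleftrightarrow> (y > 0 \<and> wfun A B C x y \<le> 0)"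
    using halfplane_w[OF hp] by blast
  have bd': "\<forall>x\<in>surface_boundary T f. wfun A B C (cx (f x)) (cy (f x)) \<le> 0"
    using bd mem unfolding proj_H2_def by blast
  have all: "\<forall>x\<in>topspace T. wfun A B C (cx (f x)) (cy (f x)) \<le> 0"
    by (rule soliton_max[OF sol _ bd']) (use nd in blast)
  have cis: "compact_immersed_surface T f" using sol unfolding translating_soliton_def by blast
  show ?thesis using all topspace_pos[OF cis] mem unfolding proj_H2_def by blast
qed

theorem proposition5p7:
  fixes T :: "'a topology" and f \<eta> :: "'a \<Rightarrow> pt"
    and \<gamma>1 \<gamma>2 S1 S2 :: "(real \<times> real) set"
  assumes "translating_soliton T f \<eta>"
    and "closed_halfplane \<gamma>1 S1" and "closed_halfplane \<gamma>2 S2"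
    and "\<gamma>2 \<subseteq> S1" and "\<gamma>1 \<subseteq> S2"
    and "\<forall>x\<in>surface_boundary T f. proj_H2 (f x) \<in> S1 \<inter> S2"
  shows "\<forall>x\<in>topspace T. proj_H2 (f x) \<in> S1 \<inter> S2"
proof -
  have "\<forall>x\<in>topspace T. proj_H2 (f x) \<in> S1"
    using one_side[OF assms(1) assms(2)] assms(6) by blast
  moreover have "\<forall>x\<in>topspace T. proj_H2 (f x) \<in> S2"
    using one_side[OF assms(1) assms(3)] assms(6) by blast
  ultimately show ?thesis by blast
qed


end
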